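(* Let $a,A$ be real numbers with $a+3>0$ and $$\frac{a+3}{2}=\frac{2}{A+3},$$ and let $b_1,\dots,b_N$, $B_1,\dots,B_N$ be real numbers with $$\sqrt{\frac{2}{a+3}}(b_n+3)=\sqrt{\frac{2}{A+3}}(B_n+3)\qquad(n=1,\dots,N).$$ Let $\eta,\mathcal{E},\lambda_1,\dots,\lambda_N$ be real, let $l,\ell$ be real with $l+\frac12=\frac{2}{A+3}\left(\ell+\frac12\right)$, and set $$E=-\eta\left(\frac{2}{A+3}\right)^2,\quad \xi=-\mathcal{E}\left(\frac{2}{A+3}\right)^2,\quad \mu_n=\left(\frac{2}{A+3}\right)^2\lambda_n .$$ If $u\in C^2((0,\infty))$ satisfies the radial equation of $U(r)=\xi r^{a+1}+\sum_{n=1}^N\mu_n r^{b_n+1}$, $$u''(r)+\left[E-\frac{l(l+1)}{r^2}-\xi r^{a+1}-\sum_{n=1}^N\mu_n r^{b_n+1}\right]u(r)=0,$$ then $v(\rho)=\rho^{-(A+1)/4}u\!\left(\rho^{(A+3)/2}\right)$ (coordinates $r=\rho^{(A+3)/2}$, $u(r)=\rho^{(A+1)/4}v(\rho)$) satisfies the radial equation of $V(\rho)=\eta\rho^{A+1}+\sum_{n=1}^N\lambda_n\rho^{B_n+1}$: $$v''(\rho)+\left[\mathcal{E}-\frac{\ell(\ell+1)}{\rho^2}-\eta\rho^{A+1}-\sum_{n=1}^N\lambda_n\rho^{B_n+1}\right]v(\rho)=0 .$$ In this sense $U$ and $V$ are quantum Newtonianly dual, bound-state eigenfunctions of $U$ (energy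 $E$, angular quantum number $l$) being transformed into eigenfunctions of $V$ (energy $\mathcal{E}$, angular quantum number $\ell$).
   Context: Three-dimensional radial equation (units $\hbar=2m=1$): $u''+\left[E-\frac{l(l+1)}{r^2}-W(r)\right]u=0$ for a central potential $W$, with $u(r)=rR(r)$. "General polynomial potentials" are finite linear combinations of powers $r^{c}$ with arbitrary real exponents $c$. *)

theory Defs
  imports "HOL-Analysis.Analysis"
begin

definition radial_solution :: "(real \<Rightarrow> real) \<Rightarrow> real \<Rightarrow> real \<Rightarrow> (real \<Rightarrow> real) \<Rightarrow> bool" where
  "radial_solution u E l W \<longleftrightarrow>
     (\<exists>u1 u2. \<forall>r>0. (u has_real_derivative u1 r) (at r) \<and>
                      (u1 has_real_derivative u2 r) (at r) \<and>
                      isCont u2 r \<and>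
                      u2 r + (E - l * (l + 1) / r\<^sup>2 - W r) * u r = 0)"

end

theory Submission
  imports Defs
begin

theorem mainTheorem5:
  fixes a A \<eta> EE l ll :: real and N :: nat
    and b B lam :: "nat \<Rightarrow> real" and u :: "real \<Rightarrow> real"
  assumes ha: "a + 3 > 0"
    and haA: "(a + 3) / 2 = 2 / (A + 3)"
    and hbB: "\<forall>n\<in>{1..N}. sqrt (2 / (a + 3)) * (b n + 3) = sqrt (2 / (A + 3)) * (B n + 3)"
    and hl: "l + 1/2 = 2 / (A + 3) * (ll + 1/2)"
    and hu: "radial_solution u (- \<eta> * (2 / (A + 3))\<^sup>2) l
               (\<lambda>r. (- EE * (2 / (A + 3))\<^sup>2) * r powr (a + 1)
                    + (\<Sum>n=1..N. ((2 / (A + 3))\<^sup>2 * lam n) * r powr (b n + 1)))"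
  shows "radial_solution (\<lambda>\<rho>. \<rho> powr (- (A + 1) / 4) * u (\<rho> powr ((A + 3) / 2))) EE ll
           (\<lambda>\<rho>. \<eta> * \<rho> powr (A + 1) + (\<Sum>n=1..N. lam n * \<rho> powr (B n + 1)))"
proof -
  define k where "k = (A + 3) / 2"
  define m where "m = (k - 1) / 2"
  have A3: "A + 3 > 0"
  proof -
    have "(a+3)/2 > 0" using ha by simp
    hence "2 / (A + 3) > 0" using haA by simp
    thus ?thesis by (simp add: zero_less_divide_iff)
  qed
  have kpos: "k > 0" using A3 by (simp add: k_def)
  have ik: "2 / (A + 3) = 1 / k" by (simp add: k_def)
  have a3: "a + 3 = 2 / k" using haA ik kpos by (simp add: field_simps)
  have e1: "(A + 3) / 2 = k" by (simp add: k_def)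
  have e2: "- (A + 1) / 4 = - m" by (simp add: m_def k_def field_simps)
  obtain u1 u2 where U: "\<And>r. r > 0 \<Longrightarrow> (u has_real_derivative u1 r) (at r) \<and>
                      (u1 has_real_derivative u2 r) (at r) \<and> isCont u2 r \<and>
                      u2 r + ((- \<eta> * (2 / (A + 3))\<^sup>2) - l * (l + 1) / r\<^sup>2 -
                        ((- EE * (2 / (A + 3))\<^sup>2) * r powr (a + 1)
                    + (\<Sum>n=1..N. ((2 / (A + 3))\<^sup>2 * lam n) * r powr (b n + 1)))) * u r = 0"
    using hu unfolding radial_solution_def by blast
  define v1 where "v1 = (\<lambda>\<rho>. - m * (\<rho> powr (-m-1) * u (\<rho> powr k))
        + \<rho> powr (-m) * (u1 (\<rho> powr k) * (k * \<rho> powr (k-1))))"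
  define v2 where "v2 = (\<lambda>\<rho>::real. \<rho> powr (-m) * (k\<^sup>2 * \<rho> powr (2*k-2) * u2 (\<rho> powr k)
        + m * (m+1) / \<rho>\<^sup>2 * u (\<rho> powr k)))"
  show ?thesis
    unfolding radial_solution_def e1 e2
  proof (rule exI[of _ v1], rule exI[of _ v2], intro allI impI conjI)
    fix \<rho> :: real assume rp: "\<rho> > 0"
    define r where "r = \<rho> powr k"
    have rpos: "r > 0" using rp by (simp add: r_def)
    note Ur = U[OF rpos]
    have dp: "\<And>e. ((\<lambda>x. x powr e) has_real_derivative e * \<rho> powr (e - 1)) (at \<rho>)"
      using rp by (rule has_real_derivative_powr)
    have du: "((\<lambda>x. u (x powr k)) has_real_derivative u1 r * (k * \<rho> powr (k-1))) (at \<rho>)"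
      using DERIV_chain2[OF _ dp[of k]] Ur r_def by auto
    have du1: "((\<lambda>x. u1 (x powr k)) has_real_derivative u2 r * (k * \<rho> powr (k-1))) (at \<rho>)"
      using DERIV_chain2[OF _ dp[of k]] Ur r_def by auto
    have "((\<lambda>\<rho>. \<rho> powr (- m) * u (\<rho> powr k)) has_real_derivative
        (-m * \<rho> powr (-m-1)) * u r + \<rho> powr (-m) * (u1 r * (k * \<rho> powr (k-1)))) (at \<rho>)"
      using DERIV_mult[OF dp[of "-m"] du] r_def by (simp add: algebra_simps)
    thus "((\<lambda>\<rho>. \<rho> powr (- m) * u (\<rho> powr k)) has_real_derivative v1 \<rho>) (at \<rho>)"
      by (simp add: v1_def r_def algebra_simps)
    have D: "(v1 has_real_derivative
        - m * (((-m-1) * \<rho> powr (-m-1-1)) * u r + \<rho> powr (-m-1) * (u1 r * (k * \<rho> powr (k-1))))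
        + ((-m * \<rho> powr (-m-1)) * (u1 r * (k * \<rho> powr (k-1)))
           + \<rho> powr (-m) * ((u2 r * (k * \<rho> powr (k-1))) * (k * \<rho> powr (k-1))
              + u1 r * (k * ((k-1) * \<rho> powr (k-1-1)))))) (at \<rho>)"
    proof -
      have t1: "((\<lambda>x. x powr (- m - 1) * u (x powr k)) has_real_derivative
        (- m - 1) * \<rho> powr (- m - 1 - 1) * u r + \<rho> powr (- m - 1) * (u1 r * (k * \<rho> powr (k - 1)))) (at \<rho>)"
        using DERIV_mult[OF dp[of "-m-1"] du] r_def by (simp add: algebra_simps)
      have t2a: "((\<lambda>x. u1 (x powr k) * (k * x powr (k - 1))) has_real_derivative
         u2 r * (k * \<rho> powr (k - 1)) * (k * \<rho> powr (k - 1)) + u1 r * (k * ((k - 1) * \<rho> powr (k - 1 - 1)))) (at \<rho>)"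
        using DERIV_mult[OF du1 DERIV_cmult[OF dp[of "k-1"]]] r_def by (simp add: algebra_simps)
      have t2: "((\<lambda>x. x powr - m * (u1 (x powr k) * (k * x powr (k - 1)))) has_real_derivative
         - m * \<rho> powr (- m - 1) * (u1 r * (k * \<rho> powr (k - 1))) + \<rho> powr - m *
          (u2 r * (k * \<rho> powr (k - 1)) * (k * \<rho> powr (k - 1)) + u1 r * (k * ((k - 1) * \<rho> powr (k - 1 - 1))))) (at \<rho>)"
        using DERIV_mult[OF dp[of "-m"] t2a] r_def by (simp add: algebra_simps)
      show ?thesis unfolding v1_def
        by (rule DERIV_add[OF DERIV_cmult[OF t1] t2])
    qed
    have p1: "\<rho> powr (-m-1) * \<rho> powr (k-1) = \<rho> powr (-m) * \<rho> powr (k-1-1)"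
      using rp by (simp add: powr_add[symmetric] algebra_simps)
    have p2: "\<rho> powr (-m-1-1) = \<rho> powr (-m) / \<rho>\<^sup>2"
    proof -
      have "\<rho> powr (-m-1-1) = \<rho> powr (-m - 2)" by (simp add: algebra_simps)
      also have "\<dots> = \<rho> powr (-m) / \<rho> powr 2" by (rule powr_diff)
      also have "\<rho> powr 2 = \<rho>\<^sup>2" using rp by (simp add: powr_numeral)
      finally show ?thesis .
    qed
    have p3: "\<rho> powr (k-1) * \<rho> powr (k-1) = \<rho> powr (2*k-2)"
      using rp by (simp add: powr_add[symmetric] algebra_simps)
    have mk: "2 * m = k - 1" by (simp add: m_def)
    have "- m * (((-m-1) * \<rho> powr (-m-1-1)) * u r + \<rho> powr (-m-1) * (u1 r * (k * \<rho> powr (k-1))))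
        + ((-m * \<rho> powr (-m-1)) * (u1 r * (k * \<rho> powr (k-1)))
           + \<rho> powr (-m) * ((u2 r * (k * \<rho> powr (k-1))) * (k * \<rho> powr (k-1))
              + u1 r * (k * ((k-1) * \<rho> powr (k-1-1)))))
       = m * (m+1) * \<rho> powr (-m-1-1) * u r
         - (2*m) * k * u1 r * (\<rho> powr (-m-1) * \<rho> powr (k-1))
         + (k-1) * k * u1 r * \<rho> powr (-m) * \<rho> powr (k-1-1)
         + \<rho> powr (-m) * k\<^sup>2 * (\<rho> powr (k-1) * \<rho> powr (k-1)) * u2 r"
      by (simp add: algebra_simps power2_eq_square)
    also have "\<dots> = v2 \<rho>"
      by (simp only: p1 p2 p3 mk v2_def r_def) (simp add: algebra_simps)
    finally show "(v1 has_real_derivative v2 \<rho>) (at \<rho>)" using D by simp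
    have cu: "isCont u r" using Ur DERIV_isCont by blast
    have cpk: "isCont (\<lambda>x. x powr k) \<rho>" using rp by (intro continuous_intros) auto
    have c1: "isCont (\<lambda>x. u (x powr k)) \<rho>" using isCont_o2[OF cpk] cu r_def by auto
    have c2: "isCont (\<lambda>x. u2 (x powr k)) \<rho>" using isCont_o2[OF cpk] Ur r_def by auto
    show "isCont v2 \<rho>" unfolding v2_def using rp c1 c2
      by (intro continuous_intros) auto
    show "v2 \<rho> + (EE - ll * (ll + 1) / \<rho>\<^sup>2 -
      (\<eta> * \<rho> powr (A + 1) + (\<Sum>n = 1..N. lam n * \<rho> powr (B n + 1)))) * (\<rho> powr - m * u (\<rho> powr k)) = 0"
    proof -
      define Q where "Q = k\<^sup>2 * \<rho> powr (2*k-2)"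
      define S where "S = (\<Sum>n=1..N. (1/k)\<^sup>2 * lam n * r powr (b n + 1))"
      define T where "T = (\<Sum>n = 1..N. lam n * \<rho> powr (B n + 1))"
      have eqU: "u2 r = - (-\<eta>*(1/k)\<^sup>2 - l*(l+1)/r\<^sup>2 - (-EE*(1/k)\<^sup>2 * r powr (a+1) + S)) * u r"
        using Ur unfolding ik S_def by (simp add: algebra_simps)
      have kA: "2*k-2 = A+1" by (simp add: k_def)
      have f1: "Q * (-\<eta>*(1/k)\<^sup>2) = -\<eta> * \<rho> powr (A+1)"
        unfolding Q_def kA using kpos by (simp add: field_simps)
      have r2: "r\<^sup>2 = \<rho> powr (2*k-2) * \<rho>\<^sup>2"
      proof -
        have "r\<^sup>2 = \<rho> powr (2*k)" unfolding r_def using rp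
          by (simp add: power2_eq_square powr_add[symmetric])
        also have "\<dots> = \<rho> powr (2*k-2) * \<rho> powr 2" by (simp add: powr_add[symmetric])
        also have "\<rho> powr 2 = \<rho>\<^sup>2" using rp by (simp add: powr_numeral)
        finally show ?thesis .
      qed
      have f2: "Q * (l*(l+1)/r\<^sup>2) = k\<^sup>2 * (l*(l+1)) / \<rho>\<^sup>2"
        unfolding Q_def r2 using rp by (simp add: field_simps)
      have ex0: "2*k-2 + k*(a+1) = 0" using a3 kpos by (simp add: field_simps)
      have f3: "Q * (-EE*(1/k)\<^sup>2 * r powr (a+1)) = -EE"
      proof -
        have "r powr (a+1) = \<rho> powr (k*(a+1))" unfolding r_def by (simp add: powr_powr)
        hence "Q * (-EE*(1/k)\<^sup>2 * r powr (a+1)) = -EE * (\<rho> powr (2*k-2) * \<rho> powr (k*(a+1)))"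
          unfolding Q_def using kpos by (simp add: field_simps)
        also have "\<rho> powr (2*k-2) * \<rho> powr (k*(a+1)) = 1"
          unfolding powr_add[symmetric] ex0 using rp by simp
        finally show ?thesis by simp
      qed
      have f4: "Q * S = T"
        unfolding S_def T_def sum_distrib_left
      proof (rule sum.cong[OF refl])
        fix n assume n: "n \<in> {1..N}"
        have sk: "sqrt (2 / (a + 3)) = sqrt k" using a3 kpos by simp
        have sk2: "sqrt (2 / (A + 3)) = 1 / sqrt k" using ik by (simp add: real_sqrt_divide)
        have "sqrt k * (b n + 3) = (B n + 3) / sqrt k" using hbB n sk sk2 by simp
        hence "sqrt k * (sqrt k * (b n + 3)) = B n + 3" using kpos by (simp add: field_simps)
        moreover have "sqrt k * (sqrt k * (b n + 3)) = k * (b n + 3)" using kpos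
          by (simp only: mult.assoc[symmetric] real_sqrt_mult_self)
        ultimately have Bn: "B n + 3 = k * (b n + 3)" by simp
        have ex: "2*k-2 + k*(b n+1) = B n + 1" using Bn by (simp add: algebra_simps)
        have "r powr (b n+1) = \<rho> powr (k*(b n+1))" unfolding r_def by (simp add: powr_powr)
        hence "Q * ((1/k)\<^sup>2 * lam n * r powr (b n + 1)) = lam n * (\<rho> powr (2*k-2) * \<rho> powr (k*(b n+1)))"
          unfolding Q_def using kpos by (simp add: field_simps)
        also have "\<rho> powr (2*k-2) * \<rho> powr (k*(b n+1)) = \<rho> powr (B n + 1)"
          unfolding powr_add[symmetric] ex by simp
        finally show "Q * ((1/k)\<^sup>2 * lam n * r powr (b n + 1)) = lam n * \<rho> powr (B n + 1)" .
      qed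
      have hQ: "Q * u2 r = (\<eta> * \<rho> powr (A+1) + k\<^sup>2 * (l*(l+1)) / \<rho>\<^sup>2 - EE + T) * u r"
      proof -
        have "Q * u2 r = - (Q * (-\<eta>*(1/k)\<^sup>2) - Q * (l*(l+1)/r\<^sup>2) - (Q * (-EE*(1/k)\<^sup>2 * r powr (a+1)) + Q * S)) * u r"
          unfolding eqU by (simp add: algebra_simps)
        thus ?thesis unfolding f1 f2 f3 f4 by simp
      qed
      have f5: "k\<^sup>2 * (l*(l+1)) + m * (m+1) = ll * (ll+1)"
      proof -
        have "l + 1/2 = (ll + 1/2)/k" using hl ik by simp
        hence "k*(2*l+1) = 2*ll+1" using kpos by (simp add: field_simps)
        hence "(k*(2*l+1))\<^sup>2 = (2*ll+1)\<^sup>2" by simp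
        thus ?thesis unfolding m_def by (simp add: field_simps power2_eq_square)
      qed
      have f6: "k\<^sup>2 * (l*(l+1)) / \<rho>\<^sup>2 + m * (m+1) / \<rho>\<^sup>2 = ll * (ll+1) / \<rho>\<^sup>2"
        using f5 by (simp add: add_divide_distrib[symmetric])
      have "v2 \<rho> = \<rho> powr (-m) * (Q * u2 r + m * (m+1) / \<rho>\<^sup>2 * u r)"
        unfolding v2_def Q_def r_def by (simp add: algebra_simps)
      also have "\<dots> = \<rho> powr (-m) * u r * (\<eta> * \<rho> powr (A+1) + T - EE + ll * (ll+1) / \<rho>\<^sup>2)"
        unfolding hQ f6[symmetric] by (simp add: algebra_simps)
      finally show ?thesis unfolding T_def[symmetric] r_def[symmetric] by (simp add: algebra_simps)
    qed
  qed
qed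

end
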